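(* Let $f\in P_k^n$ with $2\le ess(f)=n\le k$. Then (i) $\frac{n(n-1)}{2}\le cmr(f)\le \frac{n!(n-1)!}{2^{n-2}}$; (ii) $1\le mnr(f)\le \frac{n!(n-1)!}{2^{n-2}}$.
   Context: $Z_k=\{0,\dots,k-1\}$; $P_k^n$ is the set of all maps $Z_k^n\to Z_k$ in variables $x_1,\dots,x_n$. A variable $x_i$ is essential in $f$ if changing only the $i$-th argument can change the value of $f$; $Ess(f)$ is the set of essential variables, $ess(f)=|Ess(f)|$. For distinct essential $x_i,x_j$, $f_{i\leftarrow j}(a_1,\dots,a_n)=f(a_1,\dots,a_{i-1},a_j,a_{i+1},\dots,a_n)$; $f\rhd h$ means $h=f_{i\leftarrow j}$ for some such $i,j$; $Mnr(f)$ is the set of functions obtained from $f$ by one or more steps of $\rhd$. Two functions are equivalent ($\equiv$) if one is obtained from the other by permuting variables and introducing/deleting inessential variables; $mnr(f)$ is the number of $\equiv$-classes of distinct minors in $Mnr(f)$. The complexity $cmr$ is defined recursively: $cmr(f)=1$ if $ess(f)\le1$; $cmr(f)=2$ if $ess(f)=2$; and $cmr(f)=\sum_{j<i,\ x_i,x_j\in Ess(f)} cmr(f_{i\leftarrow j})$ if $ess(f)\ge3$. *)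

theory Defs
  imports Complex_Main "HOL-Combinatorics.Permutations"
begin

text \<open>Variables x_1,...,x_n are indexed 0,...,n-1. A tuple in Z_k^n is a map
  a :: nat => nat with a i < k for i < n and a i = 0 for i >= n.
  A function in P_k^n is a map f :: (nat => nat) => nat whose values on tuples lie in Z_k
  (values outside tuples are irrelevant).\<close>

definition tuples :: "nat \<Rightarrow> nat \<Rightarrow> (nat \<Rightarrow> nat) set" where
  "tuples k n = {a. (\<forall>i<n. a i < k) \<and> (\<forall>i\<ge>n. a i = 0)}"

definition P :: "nat \<Rightarrow> nat \<Rightarrow> ((nat \<Rightarrow> nat) \<Rightarrow> nat) set" where
  "P k n = {f. \<forall>a\<in>tuples k n. f a < k}"

definition essential :: "nat \<Rightarrow> nat \<Rightarrow> ((nat \<Rightarrow> nat) \<Rightarrow> nat) \<Rightarrow> nat \<Rightarrow> bool" where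
  "essential k n f i \<longleftrightarrow> i < n \<and>
     (\<exists>a\<in>tuples k n. \<exists>b\<in>tuples k n. (\<forall>j. j \<noteq> i \<longrightarrow> a j = b j) \<and> f a \<noteq> f b)"

definition Ess :: "nat \<Rightarrow> nat \<Rightarrow> ((nat \<Rightarrow> nat) \<Rightarrow> nat) \<Rightarrow> nat set" where
  "Ess k n f = {i. essential k n f i}"

definition ess :: "nat \<Rightarrow> nat \<Rightarrow> ((nat \<Rightarrow> nat) \<Rightarrow> nat) \<Rightarrow> nat" where
  "ess k n f = card (Ess k n f)"

definition ident :: "((nat \<Rightarrow> nat) \<Rightarrow> nat) \<Rightarrow> nat \<Rightarrow> nat \<Rightarrow> ((nat \<Rightarrow> nat) \<Rightarrow> nat)" where
  "ident f i j = (\<lambda>a. f (a(i := a j)))"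

definition minor_step :: "nat \<Rightarrow> nat \<Rightarrow> ((nat \<Rightarrow> nat) \<Rightarrow> nat) \<Rightarrow> ((nat \<Rightarrow> nat) \<Rightarrow> nat) \<Rightarrow> bool" where
  "minor_step k n f h \<longleftrightarrow> (\<exists>i j. i \<noteq> j \<and> i \<in> Ess k n f \<and> j \<in> Ess k n f \<and> h = ident f i j)"

definition Mnr :: "nat \<Rightarrow> nat \<Rightarrow> ((nat \<Rightarrow> nat) \<Rightarrow> nat) \<Rightarrow> ((nat \<Rightarrow> nat) \<Rightarrow> nat) set" where
  "Mnr k n f = {h. (minor_step k n)\<^sup>+\<^sup>+ f h}"

text \<open>Equivalence within P_k^n: g and h agree on tuples up to a permutation of the n variables
  (permuting variables and adding/deleting inessential ones, for functions of the same arity).\<close>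
definition fequiv :: "nat \<Rightarrow> nat \<Rightarrow> ((nat \<Rightarrow> nat) \<Rightarrow> nat) \<Rightarrow> ((nat \<Rightarrow> nat) \<Rightarrow> nat) \<Rightarrow> bool" where
  "fequiv k n g h \<longleftrightarrow> (\<exists>\<pi>. \<pi> permutes {..<n} \<and> (\<forall>a\<in>tuples k n. h a = g (a \<circ> \<pi>)))"

definition mnr :: "nat \<Rightarrow> nat \<Rightarrow> ((nat \<Rightarrow> nat) \<Rightarrow> nat) \<Rightarrow> nat" where
  "mnr k n f = card {C. \<exists>g\<in>Mnr k n f. C = {h\<in>Mnr k n f. fequiv k n g h}}"

text \<open>cmr, defined with a fuel argument m; since identification strictly decreases the number of
  essential variables, fuel n suffices (ess f <= n).\<close>
fun cmr_aux :: "nat \<Rightarrow> nat \<Rightarrow> nat \<Rightarrow> ((nat \<Rightarrow> nat) \<Rightarrow> nat) \<Rightarrow> nat" where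
  "cmr_aux k n 0 f = (if ess k n f \<le> 1 then 1 else if ess k n f = 2 then 2 else 0)"
| "cmr_aux k n (Suc m) f = (if ess k n f \<le> 1 then 1 else if ess k n f = 2 then 2 else
     (\<Sum>(i, j)\<in>{(i, j). j < i \<and> i \<in> Ess k n f \<and> j \<in> Ess k n f}. cmr_aux k n m (ident f i j)))"

definition cmr :: "nat \<Rightarrow> nat \<Rightarrow> ((nat \<Rightarrow> nat) \<Rightarrow> nat) \<Rightarrow> nat" where
  "cmr k n f = cmr_aux k n n f"

end

theory Submission
  imports Defs "HOL-Library.FuncSet"
begin


lemma tuple_comp:
  assumes "a \<in> tuples k n" "\<pi> permutes {..<n}"
  shows "a \<circ> \<pi> \<in> tuples k n"
  using assms permutes_in_image[OF assms(2)] permutes_not_in[OF assms(2)] unfolding tuples_def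
  by auto

lemma fequiv_sym: "fequiv k n g h \<Longrightarrow> fequiv k n h g"
  unfolding fequiv_def
proof (elim exE conjE)
  fix \<pi> assume p: "\<pi> permutes {..<n}" and h: "\<forall>a\<in>tuples k n. h a = g (a \<circ> \<pi>)"
  have "\<forall>a\<in>tuples k n. g a = h (a \<circ> inv \<pi>)"
  proof
    fix a assume a: "a \<in> tuples k n"
    have "a \<circ> inv \<pi> \<in> tuples k n" using tuple_comp[OF a permutes_inv[OF p]] .
    then have "h (a \<circ> inv \<pi>) = g (a \<circ> inv \<pi> \<circ> \<pi>)" using h by blast
    also have "a \<circ> inv \<pi> \<circ> \<pi> = a" using permutes_inv_o(2)[OF p] by (simp add: comp_assoc)
    finally have "h (a \<circ> inv \<pi>) = g a" .
    then show "g a = h (a \<circ> inv \<pi>)" by (rule sym)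
  qed
  then show "\<exists>\<pi>. \<pi> permutes {..<n} \<and> (\<forall>a\<in>tuples k n. g a = h (a \<circ> \<pi>))"
    using permutes_inv[OF p] by blast
qed

lemma fequiv_trans: "fequiv k n g h \<Longrightarrow> fequiv k n h l \<Longrightarrow> fequiv k n g l"
  unfolding fequiv_def
proof (elim exE conjE)
  fix p q assume p: "p permutes {..<n}" and h: "\<forall>a\<in>tuples k n. h a = g (a \<circ> p)"
    and q: "q permutes {..<n}" and l: "\<forall>a\<in>tuples k n. l a = h (a \<circ> q)"
  have "\<forall>a\<in>tuples k n. l a = g (a \<circ> (q \<circ> p))"
    using l h tuple_comp[OF _ q] by (simp add: comp_assoc)
  then show "\<exists>\<pi>. \<pi> permutes {..<n} \<and> (\<forall>a\<in>tuples k n. l a = g (a \<circ> \<pi>))"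
    using permutes_compose[OF p q] by blast
qed

lemma Ess_lt: "i \<in> Ess k n f \<Longrightarrow> i < n"
  by (simp add: Ess_def essential_def)

lemma minor_form:
  assumes "(minor_step k n)\<^sup>+\<^sup>+ f h"
  shows "\<exists>s. (\<forall>x<n. s x < n) \<and> (\<forall>x\<ge>n. s x = x) \<and> h = (\<lambda>a. f (a \<circ> s))"
  using assms
proof (induction rule: tranclp_induct)
  case (base h)
  then obtain i j where ij: "i \<in> Ess k n f" "j \<in> Ess k n f" "h = ident f i j"
    unfolding minor_step_def by blast
  have "a(i := a j) = a \<circ> (id(i := j))" for a :: "nat \<Rightarrow> nat" by (auto simp: fun_eq_iff)
  then have "h = (\<lambda>a. f (a \<circ> id(i := j)))" using ij(3) unfolding ident_def by metis
  moreover have "\<forall>x<n. (id(i := j)) x < n" "\<forall>x\<ge>n. (id(i := j)) x = x"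
    using Ess_lt[OF ij(1)] Ess_lt[OF ij(2)] by auto
  ultimately show ?case by blast
next
  case (step g h)
  then obtain s where s: "\<forall>x<n. s x < n" "\<forall>x\<ge>n. s x = x" "g = (\<lambda>a. f (a \<circ> s))" by blast
  from step(2) obtain i j where ij: "i \<in> Ess k n g" "j \<in> Ess k n g" "h = ident g i j"
    unfolding minor_step_def by blast
  have "a(i := a j) \<circ> s = a \<circ> (id(i := j) \<circ> s)" for a :: "nat \<Rightarrow> nat" by (auto simp: fun_eq_iff)
  then have "h = (\<lambda>a. f (a \<circ> (id(i := j) \<circ> s)))" using ij(3) s(3) unfolding ident_def by metis
  moreover have "\<forall>x<n. (id(i := j) \<circ> s) x < n" "\<forall>x\<ge>n. (id(i := j) \<circ> s) x = x"
    using Ess_lt[OF ij(1)] Ess_lt[OF ij(2)] s by auto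
  ultimately show ?case by blast
qed

definition cs :: "nat \<Rightarrow> (nat \<Rightarrow> nat) \<Rightarrow> nat \<Rightarrow> nat" where
  "cs n s x = (if x < n then (LEAST y. s y = s x) else x)"

lemma perm_ext:
  fixes n :: nat and L :: "nat set" and t :: "nat \<Rightarrow> nat"
  assumes L: "L \<subseteq> {..<n}" and inj: "inj_on t L" and tL: "t ` L \<subseteq> {..<n}"
  shows "\<exists>\<pi>. \<pi> permutes {..<n} \<and> (\<forall>y\<in>L. \<pi> y = t y)"
proof -
  have fL: "finite L" using L by (rule finite_subset) simp
  have c1: "card ({..<n} - L) = n - card L" using L fL by (simp add: card_Diff_subset)
  have c2: "card ({..<n} - t ` L) = n - card L"
    using tL fL inj by (simp add: card_Diff_subset card_image)
  have c: "card ({..<n} - L) = card ({..<n} - t ` L)" using c1 c2 by simp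
  obtain \<sigma> where sg: "bij_betw \<sigma> ({..<n} - L) ({..<n} - t ` L)"
    using finite_same_card_bij[OF finite_Diff[OF finite_lessThan] finite_Diff[OF finite_lessThan] c] by blast
  define \<pi> where "\<pi> x = (if x \<in> L then t x else if x < n then \<sigma> x else x)" for x
  have b1: "bij_betw \<pi> L (t ` L)"
  proof -
    have "bij_betw t L (t ` L)" using inj by (simp add: bij_betw_def)
    moreover have "\<And>x. x \<in> L \<Longrightarrow> \<pi> x = t x" by (simp add: \<pi>_def)
    ultimately show ?thesis using bij_betw_cong by blast
  qed
  have b2: "bij_betw \<pi> ({..<n} - L) ({..<n} - t ` L)"
  proof -
    have "\<And>x. x \<in> {..<n} - L \<Longrightarrow> \<pi> x = \<sigma> x" by (simp add: \<pi>_def)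
    then show ?thesis using sg bij_betw_cong by blast
  qed
  have dj: "t ` L \<inter> ({..<n} - t ` L) = {}" by blast
  have "bij_betw \<pi> (L \<union> ({..<n} - L)) (t ` L \<union> ({..<n} - t ` L))"
    by (rule bij_betw_combine[OF b1 b2 dj])
  moreover have "L \<union> ({..<n} - L) = {..<n}" using L by blast
  moreover have "t ` L \<union> ({..<n} - t ` L) = {..<n}" using tL by blast
  ultimately have bb: "bij_betw \<pi> {..<n} {..<n}" by simp
  have out: "\<And>x. x \<notin> {..<n} \<Longrightarrow> \<pi> x = x" using L by (auto simp: \<pi>_def)
  have "\<pi> permutes {..<n}" by (rule bij_imp_permutes[OF bb out])
  moreover have "\<forall>y\<in>L. \<pi> y = t y" by (simp add: \<pi>_def)
  ultimately show ?thesis by blast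
qed

lemma cs_perm:
  assumes "\<forall>x<n. s x < n" "\<forall>x\<ge>n. s x = x"
  shows "\<exists>\<pi>. \<pi> permutes {..<n} \<and> s = \<pi> \<circ> cs n s"
proof -
  have sc: "s (cs n s x) = s x" if "x < n" for x
    using that LeastI[of "\<lambda>y. s y = s x" x] by (simp add: cs_def)
  have csl: "cs n s x \<le> x" for x
    by (auto simp: cs_def intro: Least_le)
  define L where "L = cs n s ` {..<n}"
  have L: "L \<subseteq> {..<n}" using csl by (auto simp: L_def intro: le_less_trans)
  have inj: "inj_on s L"
  proof (rule inj_onI)
    fix y1 y2 assume "y1 \<in> L" "y2 \<in> L" "s y1 = s y2"
    then obtain x1 x2 where "x1 < n" "x2 < n" "y1 = cs n s x1" "y2 = cs n s x2"
      by (auto simp: L_def)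
    then show "y1 = y2" using \<open>s y1 = s y2\<close> sc by (simp add: cs_def)
  qed
  have "s ` L \<subseteq> {..<n}" using L assms by auto
  then obtain \<pi> where p: "\<pi> permutes {..<n}" "\<forall>y\<in>L. \<pi> y = s y"
    using perm_ext[OF L inj] by blast
  have "s x = \<pi> (cs n s x)" for x
  proof (cases "x < n")
    case True then show ?thesis using p sc by (auto simp: L_def)
  next
    case False then show ?thesis using p assms by (auto simp: cs_def permutes_not_in)
  qed
  then show ?thesis using p by (auto simp: fun_eq_iff)
qed



lemma Ess_fin: "finite (Ess k n f)"
proof (rule finite_subset[of _ "{..<n}"])
  show "Ess k n f \<subseteq> {..<n}" using Ess_lt by blast
qed simp

lemma Ess_ident:
  assumes i: "i \<in> Ess k n g" and j: "j \<in> Ess k n g" and ij: "i \<noteq> j"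
  shows "Ess k n (ident g i j) \<subseteq> Ess k n g - {i}"
proof
  fix l assume "l \<in> Ess k n (ident g i j)"
  then have "essential k n (ident g i j) l" by (simp add: Ess_def)
  then have "l < n \<and> (\<exists>a\<in>tuples k n. \<exists>b\<in>tuples k n. (\<forall>x. x \<noteq> l \<longrightarrow> a x = b x) \<and> ident g i j a \<noteq> ident g i j b)"
    by (simp only: essential_def)
  then obtain a b where l: "l < n" and a: "a \<in> tuples k n" and b: "b \<in> tuples k n"
    and ab: "\<forall>x. x \<noteq> l \<longrightarrow> a x = b x" and ne': "ident g i j a \<noteq> ident g i j b"
    by blast
  have ne: "g (a(i := a j)) \<noteq> g (b(i := b j))" using ne' by (simp add: ident_def)
  have il: "i < n" "j < n" using Ess_lt i j by auto
  show "l \<in> Ess k n g - {i}"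
  proof (cases "l = i")
    case True
    then have "a(i := a j) = b(i := b j)" using ab ij by (auto simp: fun_eq_iff)
    then show ?thesis using ne by simp
  next
    case False
    show ?thesis
    proof (cases "l = j")
      case True then show ?thesis using j False by simp
    next
      case lj: False
      have ta: "a(i := a j) \<in> tuples k n" using a il unfolding tuples_def by auto
      have tb: "b(i := b j) \<in> tuples k n" using b il unfolding tuples_def by auto
      have ag: "\<forall>x. x \<noteq> l \<longrightarrow> (a(i := a j)) x = (b(i := b j)) x"
      proof (intro allI impI)
        fix x assume "x \<noteq> l"
        then show "(a(i := a j)) x = (b(i := b j)) x" using ab lj by simp
      qed
      have "\<exists>a'\<in>tuples k n. \<exists>b'\<in>tuples k n. (\<forall>x. x \<noteq> l \<longrightarrow> a' x = b' x) \<and> g a' \<noteq> g b'"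
        using ta tb ag ne by blast
      then have "essential k n g l" unfolding essential_def using l by blast
      then show ?thesis using False by (simp add: Ess_def)
    qed
  qed
qed

lemma ess_ident:
  assumes "i \<in> Ess k n g" "j \<in> Ess k n g" "i \<noteq> j"
  shows "ess k n (ident g i j) \<le> ess k n g - 1"
proof -
  have "ess k n (ident g i j) \<le> card (Ess k n g - {i})"
    unfolding ess_def using Ess_fin Ess_ident[OF assms] by (simp add: card_mono)
  also have "\<dots> = ess k n g - 1" using assms(1) Ess_fin by (simp add: ess_def)
  finally show ?thesis .
qed


lemma card_pairs:
  fixes E :: "nat set" assumes fin: "finite E"
  shows "2 * card {(i, j). j < i \<and> i \<in> E \<and> j \<in> E} = card E * (card E - 1)"
proof -
  define S where "S = {(i, j). j < i \<and> i \<in> E \<and> j \<in> E}"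
  have SE: "S \<subseteq> E \<times> E" by (auto simp: S_def)
  have fS: "finite S" using SE fin finite_subset by blast
  have eq: "E \<times> E = (S \<union> prod.swap ` S) \<union> (\<lambda>x. (x, x)) ` E"
  proof
    show "E \<times> E \<subseteq> (S \<union> prod.swap ` S) \<union> (\<lambda>x. (x, x)) ` E"
    proof
      fix p assume "p \<in> E \<times> E"
      then obtain a b where pab: "p = (a, b)" and ab: "a \<in> E" "b \<in> E" by blast
      consider "b < a" | "a < b" | "a = b" by linarith
      then have "(a, b) \<in> (S \<union> prod.swap ` S) \<union> (\<lambda>x. (x, x)) ` E"
      proof cases
        case 1 then have "(a, b) \<in> S" using ab by (simp add: S_def)
        then show ?thesis by blast
      next
        case 2 then have "(b, a) \<in> S" using ab by (simp add: S_def)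
        then have "prod.swap (b, a) \<in> prod.swap ` S" by (rule imageI)
        then show ?thesis by simp
      next
        case 3 then show ?thesis using ab by blast
      qed
      then show "p \<in> (S \<union> prod.swap ` S) \<union> (\<lambda>x. (x, x)) ` E" using pab by simp
    qed
    show "(S \<union> prod.swap ` S) \<union> (\<lambda>x. (x, x)) ` E \<subseteq> E \<times> E"
      using SE by auto
  qed
  have d1: "S \<inter> prod.swap ` S = {}" by (auto simp: S_def)
  have d2: "(S \<union> prod.swap ` S) \<inter> (\<lambda>x. (x, x)) ` E = {}" by (auto simp: S_def)
  have "card (E \<times> E) = card (S \<union> prod.swap ` S) + card ((\<lambda>x. (x, x)) ` E)"
    unfolding eq using fS fin d2 by (intro card_Un_disjoint) auto
  also have "card (S \<union> prod.swap ` S) = card S + card S"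
    using fS d1 by (simp add: card_Un_disjoint card_image)
  also have "card ((\<lambda>x. (x, x)) ` E) = card E" by (simp add: card_image inj_on_def)
  finally have "card E * card E = 2 * card S + card E" by (simp add: card_cartesian_product)
  then show ?thesis unfolding S_def[symmetric]
    by (metis add_diff_cancel_right' diff_mult_distrib2 mult.right_neutral)
qed


fun Bn :: "nat \<Rightarrow> nat" where
  "Bn 0 = 1"
| "Bn (Suc 0) = 1"
| "Bn (Suc (Suc 0)) = 2"
| "Bn (Suc (Suc (Suc e))) = Bn (Suc (Suc e)) * ((e + 3) * (e + 2) div 2)"

lemma Bn_Suc_le: "Bn e \<le> Bn (Suc e)"
proof (induction e rule: Bn.induct)
  case (4 e)
  have m: "2 \<le> (Suc e + 3) * (Suc e + 2)" by (simp add: algebra_simps)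
  have c: "1 \<le> (Suc e + 3) * (Suc e + 2) div 2"
    using div_le_mono[OF m, of 2] by simp
  have "Bn (Suc (Suc (Suc e))) * 1 \<le> Bn (Suc (Suc (Suc e))) * ((Suc e + 3) * (Suc e + 2) div 2)"
    using c by (rule mult_le_mono2)
  then show ?case unfolding Bn.simps(4)[of "Suc e"] by (metis mult_1_right)
qed simp_all

lemma Bn_mono: "a \<le> b \<Longrightarrow> Bn a \<le> Bn b"
  by (rule lift_Suc_mono_le[of Bn]) (auto simp: Bn_Suc_le)

lemma Bn_rec: "3 \<le> e \<Longrightarrow> Bn e = Bn (e - 1) * (e * (e - 1) div 2)"
proof -
  assume "3 \<le> e"
  then have e: "e = Suc (Suc (Suc (e - 3)))" by arith
  define d where "d = e - 3"
  have e': "e = Suc (Suc (Suc d))" using e d_def by simp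
  have h: "e - 1 = Suc (Suc d)" "e * (e - 1) = (d + 3) * (d + 2)" using e' by (simp_all add: algebra_simps)
  have "Bn e = Bn (Suc (Suc (Suc d)))" by (rule arg_cong[OF e'])
  also have "\<dots> = Bn (Suc (Suc d)) * ((d + 3) * (d + 2) div 2)" by (rule Bn.simps(4))
  also have "\<dots> = Bn (e - 1) * (e * (e - 1) div 2)" using h by metis
  finally show ?thesis .
qed

lemma fact_le_Bn: "fact e \<le> Bn e"
proof (induction e rule: Bn.induct)
  case (4 e)
  have m: "2 * (e + 3) \<le> (e + 3) * (e + 2)" by (simp add: algebra_simps)
  have a: "Suc (Suc (Suc e)) \<le> (e + 3) * (e + 2) div 2"
    using div_le_mono[OF m, of 2] by simp
  have "fact (Suc (Suc (Suc e))) = Suc (Suc (Suc e)) * (fact (Suc (Suc e)) :: nat)"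
    by (simp only: fact_Suc of_nat_id)
  also have "\<dots> \<le> Suc (Suc (Suc e)) * Bn (Suc (Suc e))" using 4 by (rule mult_le_mono2)
  also have "\<dots> \<le> ((e + 3) * (e + 2) div 2) * Bn (Suc (Suc e))"
    using a by (rule mult_le_mono1)
  also have "\<dots> = Bn (Suc (Suc (Suc e)))" by (simp only: Bn.simps(4) mult.commute)
  finally show ?case .
next
  case 3 show ?case by (simp only: Bn.simps fact_Suc fact_0) simp
qed simp_all


lemma alg_aux: "(a::real) * F * F / p * (b * a / 2) = b * (a * F) * (a * F) / (2 * p)"
  by (simp add: mult_ac)
lemma Bn_real: "real (Bn e) = fact e * fact (e - 1) / 2 ^ (e - 2)"
proof (induction e rule: Bn.induct)
  case (4 e)
  have ev: "real ((e + 3) * (e + 2) div 2) = real (e + 3) * real (e + 2) / 2"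
  proof -
    have "even ((e + 3) * (e + 2))" by simp
    then have "real ((e + 3) * (e + 2) div 2) = real ((e + 3) * (e + 2)) / 2"
      by (simp add: real_of_nat_div)
    then show ?thesis by (simp only: of_nat_mult)
  qed
  define F where "F = (fact (Suc e) :: real)"
  have f2: "fact (Suc (Suc e)) = real (e + 2) * F"
    unfolding F_def by (simp only: fact_Suc[of "Suc e"]) simp
  have f3: "fact (Suc (Suc (Suc e))) = real (e + 3) * (real (e + 2) * F)"
    unfolding f2[symmetric] by (simp only: fact_Suc[of "Suc (Suc e)"]) simp
  have ih: "real (Bn (Suc (Suc e))) = fact (Suc (Suc e)) * fact (Suc e) / 2 ^ e"
    using 4 by (simp only: diff_Suc_1 numeral_2_eq_2 diff_Suc_Suc diff_zero)
  have "real (Bn (Suc (Suc (Suc e)))) = real (Bn (Suc (Suc e))) * (real (e + 3) * real (e + 2) / 2)"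
    by (simp only: Bn.simps(4) of_nat_mult ev)
  also have "\<dots> = real (e + 2) * F * F / 2 ^ e * (real (e + 3) * real (e + 2) / 2)"
    unfolding ih f2 F_def ..
  also have "\<dots> = real (e + 3) * (real (e + 2) * F) * (real (e + 2) * F) / 2 ^ Suc e"
    unfolding power_Suc by (rule alg_aux)
  also have "\<dots> = fact (Suc (Suc (Suc e))) * fact (Suc (Suc (Suc e)) - 1) / 2 ^ (Suc (Suc (Suc e)) - 2)"
  proof -
    have d1: "Suc (Suc (Suc e)) - 1 = Suc (Suc e)" "Suc (Suc (Suc e)) - 2 = Suc e" by simp_all
    show ?thesis unfolding d1 f3 f2 by (rule refl)
  qed
  finally show ?case .
next
  case 3 show ?case by (simp only: Bn.simps fact_Suc fact_0 diff_Suc_Suc diff_zero diff_Suc_1 power_0) simp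
qed simp_all



lemma cmr_aux_bound:
  "ess k n g \<le> m \<Longrightarrow> 1 \<le> cmr_aux k n m g \<and> cmr_aux k n m g \<le> Bn (ess k n g) \<and>
     (3 \<le> ess k n g \<longrightarrow> ess k n g * (ess k n g - 1) div 2 \<le> cmr_aux k n m g)"
proof (induction m arbitrary: g)
  case 0
  then show ?case by simp
next
  case (Suc m)
  define e where "e = ess k n g"
  show ?case
  proof (cases "e \<le> 1")
    case True
    then have "e = 0 \<or> e = 1" by arith
    then show ?thesis using True by (auto simp: e_def)
  next
    case F1: False
    show ?thesis
    proof (cases "e = 2")
      case True
      then show ?thesis by (simp add: e_def numeral_2_eq_2)
    next
      case F2: False
      then have e3: "3 \<le> e" using F1 by arith
      define S where "S = {(i, j). j < i \<and> i \<in> Ess k n g \<and> j \<in> Ess k n g}"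
      have cmr: "cmr_aux k n (Suc m) g = (\<Sum>(i, j)\<in>S. cmr_aux k n m (ident g i j))"
        using F1 F2 by (simp add: S_def e_def)
      have cS: "card S = e * (e - 1) div 2"
        using card_pairs[OF Ess_fin, of k n g] unfolding S_def e_def ess_def by simp
      have tm: "1 \<le> cmr_aux k n m (ident g i j) \<and> cmr_aux k n m (ident g i j) \<le> Bn (e - 1)"
        if "(i, j) \<in> S" for i j
      proof -
        from that have ij: "i \<in> Ess k n g" "j \<in> Ess k n g" "i \<noteq> j" by (auto simp: S_def)
        have le: "ess k n (ident g i j) \<le> e - 1" using ess_ident[OF ij] by (simp add: e_def)
        then have "ess k n (ident g i j) \<le> m" using Suc.prems by (simp add: e_def)
        then have "1 \<le> cmr_aux k n m (ident g i j) \<and> cmr_aux k n m (ident g i j) \<le> Bn (ess k n (ident g i j))"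
          using Suc.IH by blast
        then show ?thesis using Bn_mono[OF le] by simp
      qed
      have lo: "card S * 1 \<le> (\<Sum>(i, j)\<in>S. cmr_aux k n m (ident g i j))"
        using sum_bounded_below[of S 1 "\<lambda>(i, j). cmr_aux k n m (ident g i j)"] tm by auto
      have hi: "(\<Sum>(i, j)\<in>S. cmr_aux k n m (ident g i j)) \<le> card S * Bn (e - 1)"
        using sum_bounded_above[of S "\<lambda>(i, j). cmr_aux k n m (ident g i j)" "Bn (e - 1)"] tm by auto
      have "Bn e = Bn (e - 1) * (e * (e - 1) div 2)" using Bn_rec[OF e3] .
      then have hi': "cmr_aux k n (Suc m) g \<le> Bn e" using hi cmr cS by (simp add: mult.commute)
      have "3 * 2 div 2 \<le> e * (e - 1) div 2"
        by (rule div_le_mono) (use mult_le_mono[of 3 e 2 "e - 1"] e3 in simp)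
      then have c0: "1 \<le> card S" using cS by simp
      have c1: "1 \<le> cmr_aux k n (Suc m) g" using c0 lo unfolding cmr by linarith
      have c2: "e * (e - 1) div 2 \<le> cmr_aux k n (Suc m) g" using lo cS unfolding cmr by simp
      show ?thesis using c1 hi' c2 unfolding e_def[symmetric] by blast
    qed
  qed
qed

lemma Ess_sub: "Ess k n f \<subseteq> {..<n}" using Ess_lt by blast

definition Can :: "nat \<Rightarrow> (nat \<Rightarrow> nat) set" where
  "Can n = {t. (\<forall>x<n. t x \<le> x) \<and> (\<forall>x\<ge>n. t x = x)}"

lemma Can_card: "finite (Can n) \<and> card (Can n) \<le> fact n"
proof -
  define R where "R = (\<lambda>t::nat \<Rightarrow> nat. restrict t {..<n})"
  have inj: "inj_on R (Can n)"
  proof (rule inj_onI)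
    fix s t assume s: "s \<in> Can n" and t: "t \<in> Can n" and eq: "R s = R t"
    show "s = t"
    proof
      fix x show "s x = t x"
      proof (cases "x < n")
        case True then show ?thesis using fun_cong[OF eq, of x] by (simp add: R_def)
      next
        case False then show ?thesis using s t by (simp add: Can_def)
      qed
    qed
  qed
  have sub: "R ` Can n \<subseteq> PiE {..<n} (\<lambda>x. {..x})"
  proof
    fix u assume "u \<in> R ` Can n"
    then obtain t where t: "t \<in> Can n" "u = R t" by blast
    have tP: "t \<in> Pi {..<n} (\<lambda>x. {..x})"
    proof (rule Pi_I)
      fix x assume "x \<in> {..<n}"
      then show "t x \<in> {..x}" using t(1) by (simp add: Can_def)
    qed
    have "R t \<in> PiE {..<n} (\<lambda>x. {..x})" unfolding R_def using tP by (simp only: restrict_PiE)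
    then show "u \<in> PiE {..<n} (\<lambda>x. {..x})" using t(2) by simp
  qed
  have fP: "finite (PiE {..<n} (\<lambda>x. {..x}))" by (rule finite_PiE) auto
  have cP: "card (PiE {..<n} (\<lambda>x. {..x})) = fact n"
  proof -
    have "card (PiE {..<n} (\<lambda>x. {..x})) = (\<Prod>x\<in>{..<n}. card {..x})" by (rule card_PiE) simp
    also have "\<dots> = (\<Prod>x\<in>{0..<n}. Suc x)" by (simp add: atLeast0LessThan)
    also have "\<dots> = fact n" by (simp only: fact_prod_Suc of_nat_id)
    finally show ?thesis .
  qed
  have fin: "finite (R ` Can n)" using finite_subset[OF sub fP] .
  have "finite (Can n)" using finite_imageD[OF fin inj] .
  moreover have "card (Can n) = card (R ` Can n)" using card_image[OF inj] by simp
  moreover have "card (R ` Can n) \<le> fact n" using card_mono[OF fP sub] cP by simp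
  ultimately show ?thesis by simp
qed

lemma cs_Can: "cs n s \<in> Can n"
proof -
  have a: "cs n s x \<le> x" if "x < n" for x
  proof -
    have "cs n s x = (LEAST y. s y = s x)" using that by (simp add: cs_def)
    also have "\<dots> \<le> x" by (rule Least_le) (rule refl)
    finally show ?thesis .
  qed
  have b: "cs n s x = x" if "n \<le> x" for x using that by (simp add: cs_def)
  show ?thesis unfolding Can_def using a b by blast
qed

lemma mnr_bound:
  assumes "2 \<le> ess k n f"
  shows "1 \<le> mnr k n f \<and> mnr k n f \<le> fact n"
proof -
  define M where "M = Mnr k n f"
  define cls where "cls g = {h \<in> M. fequiv k n g h}" for g
  define Cl where "Cl = {C. \<exists>g\<in>M. C = cls g}"
  have mnr: "mnr k n f = card Cl" by (simp add: mnr_def Cl_def cls_def M_def)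
  have sub: "Cl \<subseteq> (\<lambda>t. cls (\<lambda>a. f (a \<circ> t))) ` Can n"
  proof
    fix C assume "C \<in> Cl"
    then obtain g where g: "g \<in> M" and C: "C = cls g" unfolding Cl_def by blast
    from g have "(minor_step k n)\<^sup>+\<^sup>+ f g" by (simp add: M_def Mnr_def)
    then obtain s where s: "\<forall>x<n. s x < n" "\<forall>x\<ge>n. s x = x" "g = (\<lambda>a. f (a \<circ> s))"
      using minor_form[of k n f g] by blast
    define c where "c = cs n s"
    have cC: "c \<in> Can n" unfolding c_def by (rule cs_Can)
    obtain \<pi> where p: "\<pi> permutes {..<n}" "s = \<pi> \<circ> c" using cs_perm[OF s(1) s(2)] unfolding c_def by blast
    define r where "r = (\<lambda>a. f (a \<circ> c))"
    have "\<forall>a\<in>tuples k n. g a = r (a \<circ> \<pi>)"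
    proof
      fix a :: "nat \<Rightarrow> nat"
      have "a \<circ> s = a \<circ> \<pi> \<circ> c" unfolding p(2) by (rule o_assoc)
      then show "g a = r (a \<circ> \<pi>)" unfolding s(3) r_def by simp
    qed
    then have rg: "fequiv k n r g" using p(1) unfolding fequiv_def by blast
    have gr: "fequiv k n g r" using fequiv_sym[OF rg] .
    have "cls g = cls r"
    proof -
      have "fequiv k n g h \<longleftrightarrow> fequiv k n r h" for h
        using fequiv_trans[OF rg, of h] fequiv_trans[OF gr, of h] by blast
      then show ?thesis unfolding cls_def by simp
    qed
    then have "C = cls (\<lambda>a. f (a \<circ> c))" using C unfolding r_def by simp
    then show "C \<in> (\<lambda>t. cls (\<lambda>a. f (a \<circ> t))) ` Can n" using cC by (rule image_eqI)
  qed
  have fC: "finite (Can n)" using Can_card by (rule conjunct1)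
  have fI: "finite ((\<lambda>t. cls (\<lambda>a. f (a \<circ> t))) ` Can n)" using fC by (rule finite_imageI)
  have fin: "finite Cl" using finite_subset[OF sub fI] .
  have "card Cl \<le> card ((\<lambda>t. cls (\<lambda>a. f (a \<circ> t))) ` Can n)"
    using card_mono[OF fI sub] .
  also have "\<dots> \<le> card (Can n)" using card_image_le[OF fC] .
  also have "\<dots> \<le> fact n" using Can_card by (rule conjunct2)
  finally have up: "card Cl \<le> fact n" .
  have c2: "card (Ess k n f) \<ge> 2" using assms by (simp add: ess_def)
  have "Ess k n f \<noteq> {}"
  proof
    assume "Ess k n f = {}" then show False using c2 by simp
  qed
  then obtain i where i: "i \<in> Ess k n f" by blast
  have "card (Ess k n f - {i}) = card (Ess k n f) - 1" using i by (rule card_Diff_singleton)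
  then have "card (Ess k n f - {i}) \<ge> 1" using c2 by linarith
  then have "Ess k n f - {i} \<noteq> {}" by (cases "Ess k n f - {i} = {}") simp_all
  then obtain j where j: "j \<in> Ess k n f - {i}" by blast
  have "i \<noteq> j" "j \<in> Ess k n f" using j by auto
  then have "minor_step k n f (ident f i j)" unfolding minor_step_def using i by blast
  then have "(minor_step k n)\<^sup>+\<^sup>+ f (ident f i j)" by (rule tranclp.r_into_trancl[of "minor_step k n"])
  then have "ident f i j \<in> M" unfolding M_def Mnr_def by (simp only: mem_Collect_eq)
  then have "cls (ident f i j) \<in> Cl" unfolding Cl_def by blast
  then have "Cl \<noteq> {}" by blast
  then have "0 < card Cl" using fin by (simp add: card_gt_0_iff)
  then have "1 \<le> card Cl" by simp
  then show ?thesis using up mnr by simp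
qed

theorem theorem14:
  fixes k n :: nat and f :: "(nat \<Rightarrow> nat) \<Rightarrow> nat"
  assumes "f \<in> P k n" and "2 \<le> ess k n f" and "ess k n f = n" and "n \<le> k"
  shows "(real (n * (n - 1)) / 2 \<le> real (cmr k n f) \<and>
         real (cmr k n f) \<le> fact n * fact (n - 1) / 2 ^ (n - 2)) \<and>
         (1 \<le> mnr k n f \<and>
         real (mnr k n f) \<le> fact n * fact (n - 1) / 2 ^ (n - 2))"
proof -
  have en: "ess k n f \<le> n" using assms(3) by simp
  have cb: "1 \<le> cmr k n f \<and> cmr k n f \<le> Bn n \<and> (3 \<le> n \<longrightarrow> n * (n - 1) div 2 \<le> cmr k n f)"
    unfolding cmr_def using cmr_aux_bound[OF en] unfolding assms(3) .
  have ev: "real (n * (n - 1)) / 2 = real (n * (n - 1) div 2)"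
  proof -
    have "even (n * (n - 1))" by (cases n) simp_all
    then show ?thesis by (simp add: real_of_nat_div)
  qed
  have low: "real (n * (n - 1)) / 2 \<le> real (cmr k n f)"
  proof (cases "3 \<le> n")
    case True
    then have "n * (n - 1) div 2 \<le> cmr k n f" using cb by blast
    then have "real (n * (n - 1) div 2) \<le> real (cmr k n f)" by (simp only: of_nat_le_iff)
    then show ?thesis unfolding ev .
  next
    case False
    then have "n = 2" using assms(2,3) by arith
    then show ?thesis using cb by simp
  qed
  have B: "real (Bn n) = fact n * fact (n - 1) / 2 ^ (n - 2)" by (rule Bn_real)
  have "real (cmr k n f) \<le> real (Bn n)" using cb by (simp only: of_nat_le_iff)
  then have up: "real (cmr k n f) \<le> fact n * fact (n - 1) / 2 ^ (n - 2)" unfolding B .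
  have mb: "1 \<le> mnr k n f \<and> mnr k n f \<le> fact n" using mnr_bound[OF assms(2)] .
  have "mnr k n f \<le> Bn n" using mb fact_le_Bn[of n] by linarith
  then have "real (mnr k n f) \<le> real (Bn n)" by (simp only: of_nat_le_iff)
  then have "real (mnr k n f) \<le> fact n * fact (n - 1) / 2 ^ (n - 2)" unfolding B .
  then show ?thesis using low up mb by blast
qed


end
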